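(* Let $p$ be an odd prime, $m=p-1$, and suppose $q=2m+1$ is also prime. Let $A_1$ be the $m\times m$ matrix with $(i,j)$ entry $ij\pmod q$, $1\le i,j\le m$, and let $E=w(A_1)/2$ (entrywise). Then $E$ is an $m\times m$ Latin hypercube design and $d_1(E)=\lfloor (m+1)m/3\rfloor$; in particular $E$ attains the upper bound on $d_1$ over all $m\times m$ LHDs.
   Context: The modified Williams transformation $w:\{0,\ldots,q-1\}\to\{0,\ldots,q-1\}$ is $w(x)=2x$ for $0\le x<q/2$ and $w(x)=2(q-x)$ for $q/2\le x<q$. ($A_1$ is the leading $m\times m$ principal submatrix of the $(2m+1)\times 2m$ good lattice point set whose $i$th row is $i\cdot(1,\ldots,2m)\pmod q$.) An $m\times m$ LHD is a matrix each of whose columns is a permutation of $\{1,\ldots,m\}$; $d_1(X)=\min_{i<j}\sum_k|x_{ik}-x_{jk}|$. *)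

theory Defs
  imports "HOL-Computational_Algebra.Primes"
begin

text \<open>Matrices are functions nat => nat => int, rows and columns indexed from 1.\<close>

definition williams :: "nat \<Rightarrow> nat \<Rightarrow> nat" where
  "williams q x = (if 2 * x < q then 2 * x else 2 * (q - x))"

definition A1 :: "nat \<Rightarrow> nat \<Rightarrow> nat \<Rightarrow> nat" where
  "A1 q i j = (i * j) mod q"

definition Emat :: "nat \<Rightarrow> nat \<Rightarrow> nat \<Rightarrow> int" where
  "Emat q i j = int (williams q (A1 q i j)) div 2"

definition is_LHD :: "nat \<Rightarrow> nat \<Rightarrow> (nat \<Rightarrow> nat \<Rightarrow> int) \<Rightarrow> bool" where
  "is_LHD n k X \<longleftrightarrow> (\<forall>c\<in>{1..k}. bij_betw (\<lambda>r. X r c) {1..n} (int ` {1..n}))"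

definition d1 :: "nat \<Rightarrow> nat \<Rightarrow> (nat \<Rightarrow> nat \<Rightarrow> int) \<Rightarrow> int" where
  "d1 n k X = Min {(\<Sum>c=1..k. \<bar>X r c - X s c\<bar>) | r s. 1 \<le> r \<and> r < s \<and> s \<le> n}"

end

theory Submission imports Defs "HOL-Number_Theory.Cong"
begin

lemma inv_ex:
  fixes Q a :: int
  assumes "prime Q" "\<not> Q dvd a"
  shows "\<exists>c. Q dvd (c*a - 1)"
proof -
  have "coprime a Q" using prime_imp_coprime[OF assms] by (simp add: coprime_commute)
  then obtain x where "[a*x = 1] (mod Q)" using cong_solve_coprime_int by blast
  then have "Q dvd (a*x - 1)" by (simp add: cong_iff_dvd_diff)
  then show ?thesis by (metis mult.commute)
qed

locale PQ =
  fixes M :: nat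
  assumes pr: "prime (int (2*M+1))" and M1: "M \<ge> 1"
begin

abbreviation "Q \<equiv> int (2*M+1)"

definition ab :: "int \<Rightarrow> int" where
  "ab x = min (x mod Q) (Q - x mod Q)"

lemma Qpos: "Q > 2" using M1 by simp

lemma pdvd: "Q dvd a * b \<Longrightarrow> Q dvd a \<or> Q dvd b"
  using pr prime_dvd_mult_iff by blast

lemma small_dvd: "Q dvd k \<Longrightarrow> 0 < k \<Longrightarrow> k < Q \<Longrightarrow> False"
  using zdvd_imp_le by fastforce

lemma small_dvd': "Q dvd k \<Longrightarrow> k \<noteq> 0 \<Longrightarrow> \<bar>k\<bar> < Q \<Longrightarrow> False"
  by (metis abs_ge_zero abs_le_zero_iff dvd_abs_iff linorder_not_le small_dvd)

lemma ab_dvd: "Q dvd (x - y) \<Longrightarrow> ab x = ab y"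
proof -
  assume "Q dvd (x - y)"
  then have "x mod Q = y mod Q" by (simp add: mod_eq_dvd_iff)
  then show ?thesis unfolding ab_def by simp
qed

lemma ab_neg: "ab (-x) = ab x"
  unfolding ab_def by (simp add: zmod_zminus1_eq_if min.commute)

lemma ab_nonneg: "ab x \<ge> 0"
proof -
  have "x mod Q < Q" "x mod Q \<ge> 0" using Qpos by simp_all
  then show ?thesis unfolding ab_def by linarith
qed

lemma ab_le: "ab x \<le> int M"
  unfolding ab_def using pos_mod_bound[of Q x] pos_mod_sign[of Q x] Qpos by linarith

lemma ab_pos: "\<not> Q dvd x \<Longrightarrow> ab x \<ge> 1"
  unfolding ab_def using pos_mod_bound[of Q x] pos_mod_sign[of Q x] Qpos
  by (smt (verit) dvd_eq_mod_eq_0)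

lemma ab_pm: "\<exists>s. (s = 1 \<or> s = -1) \<and> Q dvd (ab x - s*x)"
proof (cases "x mod Q \<le> Q - x mod Q")
  case True
  then have "ab x = x mod Q" unfolding ab_def by simp
  then show ?thesis by (intro exI[of _ 1]) (simp add: mod_eq_dvd_iff[symmetric])
next
  case False
  then have "ab x = Q - x mod Q" unfolding ab_def by simp
  then have "ab x - (-1)*x = Q - (x mod Q - x)" by simp
  moreover have "Q dvd (x mod Q - x)" by (metis dvd_minus_iff minus_diff_eq mod_eq_dvd_iff mod_mod_trivial)
  ultimately have "Q dvd (ab x - (-1)*x)" by (metis dvd_diff dvd_refl)
  then show ?thesis by blast
qed

lemma ab_small: "\<bar>k\<bar> \<le> int M \<Longrightarrow> ab k = \<bar>k\<bar>"
proof (cases "k \<ge> 0")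
  case True
  assume "\<bar>k\<bar> \<le> int M"
  then have "k mod Q = k" using True by (simp add: mod_pos_pos_trivial)
  then show ?thesis unfolding ab_def using True \<open>\<bar>k\<bar> \<le> int M\<close> by simp
next
  case False
  assume "\<bar>k\<bar> \<le> int M"
  have "ab k = ab (-k)" by (simp add: ab_neg)
  also have "(-k) mod Q = -k" using False \<open>\<bar>k\<bar> \<le> int M\<close> by (simp add: mod_pos_pos_trivial)
  then have "ab (-k) = -k" unfolding ab_def using False \<open>\<bar>k\<bar> \<le> int M\<close> by simp
  finally show ?thesis using False by simp
qed

lemma ab_id: "u \<in> {1..M} \<Longrightarrow> ab (int u) = int u"
  using ab_small[of "int u"] by simp

lemma ab_eq: "ab x = ab y \<Longrightarrow> Q dvd (x - y) \<or> Q dvd (x + y)"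
proof -
  assume e: "ab x = ab y"
  obtain s where s: "s = 1 \<or> s = -1" "Q dvd (ab x - s*x)" using ab_pm by blast
  obtain s' where s': "s' = 1 \<or> s' = -1" "Q dvd (ab y - s'*y)" using ab_pm by blast
  have "Q dvd ((ab y - s'*y) - (ab x - s*x))" using s s' by (simp add: dvd_diff)
  then have d: "Q dvd (s*x - s'*y)" using e by (simp add: algebra_simps)
  show ?thesis using s(1) s'(1)
  proof (elim disjE)
    assume "s = 1" "s' = 1" then show ?thesis using d by simp
  next
    assume "s = 1" "s' = -1" then show ?thesis using d by simp
  next
    assume "s = -1" "s' = 1" then have "Q dvd -(x + y)" using d by (simp add: algebra_simps)
    then show ?thesis using dvd_minus_iff by blast
  next
    assume "s = -1" "s' = -1" then have "Q dvd -(x - y)" using d by (simp add: algebra_simps)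
    then show ?thesis using dvd_minus_iff by blast
  qed
qed

lemma bij: assumes "\<not> Q dvd a"
  shows "bij_betw (\<lambda>u. nat (ab (a * int u))) {1..M} {1..M}"
proof -
  let ?f = "\<lambda>u. nat (ab (a * int u))"
  have nd: "\<not> Q dvd (a * int u)" if "u \<in> {1..M}" for u
  proof
    assume "Q dvd (a * int u)"
    then have "Q dvd int u" using pdvd assms by blast
    then show False using small_dvd[of "int u"] that by auto
  qed
  have img: "?f ` {1..M} \<subseteq> {1..M}"
  proof (rule image_subsetI)
    fix u assume u: "u \<in> {1..M}"
    have h1: "1 \<le> ab (a * int u)" using ab_pos nd[OF u] by blast
    have h2: "ab (a * int u) \<le> int M" by (rule ab_le)
    show "?f u \<in> {1..M}" using h1 h2 by (simp add: nat_le_iff le_nat_iff)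
  qed
  have inj: "inj_on ?f {1..M}"
  proof (rule inj_onI)
    fix u v assume uv: "u \<in> {1..M}" "v \<in> {1..M}" "?f u = ?f v"
    then have "int (?f u) = int (?f v)" by simp
    then have "ab (a * int u) = ab (a * int v)" using ab_nonneg[of "a * int u"] ab_nonneg[of "a * int v"]
      by simp
    then have "Q dvd (a*int u - a * int v) \<or> Q dvd (a * int u + a * int v)" by (rule ab_eq)
    then have "Q dvd (a*(int u - int v)) \<or> Q dvd (a * (int u + int v))" by (simp add: algebra_simps)
    then have "Q dvd (int u - int v) \<or> Q dvd (int u + int v)" using pdvd assms by blast
    then show "u = v"
    proof
      assume "Q dvd (int u - int v)"
      show ?thesis
      proof (rule ccontr)
        assume "u \<noteq> v"
        then have "int u - int v \<noteq> 0" "\<bar>int u - int v\<bar> < Q" using uv by auto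
        then show False using small_dvd' \<open>Q dvd (int u - int v)\<close> by blast
      qed
    next
      assume "Q dvd (int u + int v)"
      then show ?thesis using small_dvd[of "int u + int v"] uv by auto
    qed
  qed
  have "?f ` {1..M} = {1..M}" using endo_inj_surj[OF _ img inj] by simp
  then show ?thesis using inj by (simp add: bij_betw_def)
qed

lemma reindex:
  assumes a: "\<not> Q dvd a" and c: "Q dvd (c*a - b)"
  shows "(\<Sum>u\<in>{1..M}. F (ab (a * int u)) (ab (b * int u)))
       = (\<Sum>v\<in>{1..M}. F (int v) (ab (c * int v)))"
proof -
  have pt: "ab (b * int u) = ab (c * ab (a * int u))" for u
  proof -
    obtain s where s: "s = 1 \<or> s = -1" "Q dvd (ab (a*int u) - s*(a*int u))" using ab_pm by blast
    have "c * ab (a * int u) - s * (b * int u)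
        = c * (ab (a*int u) - s*(a*int u)) + s * int u * (c*a - b)" by (simp add: algebra_simps)
    then have "Q dvd (c * ab (a * int u) - s * (b * int u))" using s(2) c by simp
    then have "ab (c * ab (a * int u)) = ab (s * (b * int u))" by (rule ab_dvd)
    then show ?thesis using s(1) ab_neg by auto
  qed
  have "(\<Sum>u\<in>{1..M}. F (ab (a * int u)) (ab (b * int u)))
      = (\<Sum>u\<in>{1..M}. (\<lambda>v. F (int v) (ab (c * int v))) (nat (ab (a * int u))))"
    using pt ab_nonneg by (intro sum.cong) auto
  also have "\<dots> = (\<Sum>v\<in>{1..M}. F (int v) (ab (c * int v)))"
    by (rule sum.reindex_bij_betw[OF bij[OF a]])
  finally show ?thesis .
qed


definition S :: "int \<Rightarrow> int" where
  "S t = (\<Sum>u\<in>{1..M}. min (int u) (ab (t * int u)))"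

definition D :: "int \<Rightarrow> int" where
  "D t = (\<Sum>u\<in>{1..M}. \<bar>int u - ab (t * int u)\<bar>)"

definition sig :: int where "sig = 2 * (\<Sum>u\<in>{1..M}. int u)"

lemma S_cong: "Q dvd (t - t') \<Longrightarrow> S t = S t'"
proof -
  assume h: "Q dvd (t - t')"
  have "ab (t * int u) = ab (t' * int u)" for u
  proof (rule ab_dvd)
    have "t * int u - t' * int u = (t - t') * int u" by (simp add: algebra_simps)
    then show "Q dvd (t * int u - t' * int u)" using h by simp
  qed
  then show ?thesis unfolding S_def by simp
qed

lemma S_neg: "S (-t) = S t"
  unfolding S_def using ab_neg[of "t * int _"] by simp

lemma S_inv: assumes "\<not> Q dvd t" "Q dvd (c*t - 1)" shows "S c = S t"
proof -
  have "(\<Sum>u\<in>{1..M}. (\<lambda>x y. min y x) (ab (t * int u)) (ab (1 * int u)))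
       = (\<Sum>v\<in>{1..M}. (\<lambda>x y. min y x) (int v) (ab (c * int v)))"
    by (rule reindex[OF assms])
  then show ?thesis unfolding S_def using ab_id by (simp add: min.commute)
qed

lemma sum_ab: assumes "\<not> Q dvd t" shows "(\<Sum>u\<in>{1..M}. ab (t * int u)) = (\<Sum>u\<in>{1..M}. int u)"
proof -
  have "(\<Sum>u\<in>{1..M}. ab (t * int u)) = (\<Sum>u\<in>{1..M}. int (nat (ab (t * int u))))"
    using ab_nonneg by simp
  also have "\<dots> = (\<Sum>u\<in>{1..M}. int u)"
    by (rule sum.reindex_bij_betw[OF bij[OF assms], of int])
  finally show ?thesis .
qed

lemma DS: assumes "\<not> Q dvd t" shows "D t + 2 * S t = sig"
proof -
  have "D t + 2 * S t = (\<Sum>u\<in>{1..M}. \<bar>int u - ab (t * int u)\<bar> + 2 * min (int u) (ab (t * int u)))"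
    unfolding D_def S_def by (simp add: sum.distrib sum_distrib_left)
  also have "\<dots> = (\<Sum>u\<in>{1..M}. int u + ab (t * int u))"
    by (intro sum.cong) auto
  also have "\<dots> = sig" unfolding sig_def using sum_ab[OF assms] by (simp add: sum.distrib)
  finally show ?thesis .
qed

lemma absdiff: "\<bar>ab x - ab y\<bar> = min (ab (x - y)) (ab (x + y))"
proof -
  obtain s where s: "s = 1 \<or> s = -1" "Q dvd (ab x - s*x)" using ab_pm by blast
  obtain s' where s': "s' = 1 \<or> s' = -1" "Q dvd (ab y - s'*y)" using ab_pm by blast
  let ?a = "ab x" and ?b = "ab y"
  have key: "min (ab (?a - ?b)) (ab (?a + ?b)) = \<bar>?a - ?b\<bar>"
  proof -
    have b: "0 \<le> ?a" "?a \<le> int M" "0 \<le> ?b" "?b \<le> int M" using ab_nonneg ab_le by auto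
    have 1: "ab (?a - ?b) = \<bar>?a - ?b\<bar>" using b by (intro ab_small) auto
    have "(?a + ?b) mod Q = ?a + ?b" using b by (intro mod_pos_pos_trivial) auto
    then have "ab (?a + ?b) = min (?a + ?b) (Q - (?a + ?b))" unfolding ab_def by simp
    then have "ab (?a + ?b) \<ge> \<bar>?a - ?b\<bar>" using b by auto
    then show ?thesis using 1 by simp
  qed
  have dx: "Q dvd (x - s * ?a)" and dy: "Q dvd (y - s' * ?b)"
  proof -
    have "x - s * ?a = - s * (?a - s * x)" using s(1) by (auto simp: algebra_simps)
    then show "Q dvd (x - s * ?a)" using s(2) by simp
    have "y - s' * ?b = - s' * (?b - s' * y)" using s'(1) by (auto simp: algebra_simps)
    then show "Q dvd (y - s' * ?b)" using s'(2) by simp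
  qed
  have e1: "ab (x - y) = ab (s * ?a - s' * ?b)"
  proof (rule ab_dvd)
    have "x - y - (s * ?a - s' * ?b) = (x - s * ?a) - (y - s' * ?b)" by simp
    then show "Q dvd (x - y - (s * ?a - s' * ?b))" using dx dy by (metis dvd_diff)
  qed
  have e2: "ab (x + y) = ab (s * ?a + s' * ?b)"
  proof (rule ab_dvd)
    have "x + y - (s * ?a + s' * ?b) = (x - s * ?a) + (y - s' * ?b)" by simp
    then show "Q dvd (x + y - (s * ?a + s' * ?b))" using dx dy by (metis dvd_add)
  qed
  show ?thesis using s(1) s'(1)
  proof (elim disjE)
    assume "s = 1" "s' = 1" then show ?thesis using e1 e2 key by simp
  next
    assume "s = 1" "s' = -1" then show ?thesis using e1 e2 key by (simp add: min.commute)
  next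
    assume h: "s = -1" "s' = 1"
    have "ab (- ?a - ?b) = ab (?a + ?b)" using ab_neg[of "?a + ?b"] by simp
    moreover have "ab (- ?a + ?b) = ab (?a - ?b)" using ab_neg[of "?a - ?b"] by simp
    ultimately show ?thesis using e1 e2 key h by (simp add: min.commute)
  next
    assume h: "s = -1" "s' = -1"
    have "ab (- ?a + ?b) = ab (?a - ?b)" using ab_neg[of "?a - ?b"] by simp
    moreover have "ab (- ?a - ?b) = ab (?a + ?b)" using ab_neg[of "?a + ?b"] by simp
    ultimately show ?thesis using e1 e2 key h by simp
  qed
qed

lemma D_S: assumes "\<not> Q dvd (1 - t)" "Q dvd (g * (1 - t) - (1 + t))"
  shows "D t = S g"
proof -
  have "D t = (\<Sum>u\<in>{1..M}. min (ab ((1 - t) * int u)) (ab ((1 + t) * int u)))"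
    unfolding D_def
  proof (intro sum.cong refl)
    fix u assume u: "u \<in> {1..M}"
    have "\<bar>int u - ab (t * int u)\<bar> = \<bar>ab (int u) - ab (t * int u)\<bar>" using ab_id[OF u] by simp
    also have "\<dots> = min (ab (int u - t * int u)) (ab (int u + t * int u))" by (rule absdiff)
    also have "\<dots> = min (ab ((1 - t) * int u)) (ab ((1 + t) * int u))" by (simp add: algebra_simps)
    finally show "\<bar>int u - ab (t * int u)\<bar> = \<dots>" .
  qed
  also have "\<dots> = (\<Sum>v\<in>{1..M}. min (int v) (ab (g * int v)))"
    by (rule reindex[OF assms])
  finally show ?thesis unfolding S_def .
qed

lemma Q_not_dvd_2: "\<not> Q dvd 2"
  using small_dvd[of 2] Qpos by auto

lemma mainD:
  assumes t: "\<not> Q dvd t" "\<not> Q dvd (1 - t)" "\<not> Q dvd (1 + t)"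
  shows "3 * D t = sig"
proof -
  obtain c where c: "Q dvd (c * (1 - t) - 1)" using inv_ex[OF pr t(2)] by blast
  define g where "g = c * (1 + t)"
  have gq: "Q dvd (g * (1 - t) - (1 + t))"
  proof -
    have "g * (1 - t) - (1 + t) = (1 + t) * (c * (1 - t) - 1)" unfolding g_def by (simp add: algebra_simps)
    then show ?thesis using c by simp
  qed
  have g1: "\<not> Q dvd g"
  proof
    assume "Q dvd g"
    then have "Q dvd c \<or> Q dvd (1 + t)" unfolding g_def using pdvd by blast
    then have "Q dvd c" using t by blast
    then have "Q dvd (c * (1 - t))" by simp
    then have "Q dvd (c * (1 - t) - (c * (1 - t) - 1))" using c by (rule dvd_diff)
    then have "Q dvd 1" by simp
    then show False using Q_not_dvd_2 dvd_trans[of Q 1 2] by simp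
  qed
  have g2: "\<not> Q dvd (1 - g)"
  proof
    assume "Q dvd (1 - g)"
    then have "Q dvd ((1 - g) * (1 - t))" by simp
    then have "Q dvd ((1 - g) * (1 - t) + (g * (1 - t) - (1 + t)))" using gq by (rule dvd_add)
    moreover have "(1 - g) * (1 - t) + (g * (1 - t) - (1 + t)) = - (2 * t)" by (simp add: algebra_simps)
    ultimately have "Q dvd (2 * t)" by simp
    then show False using pdvd Q_not_dvd_2 t(1) by blast
  qed
  have g3: "\<not> Q dvd (1 + g)"
  proof
    assume "Q dvd (1 + g)"
    then have "Q dvd ((1 + g) * (1 - t))" by simp
    then have "Q dvd ((1 + g) * (1 - t) - (g * (1 - t) - (1 + t)))" using gq by (rule dvd_diff)
    moreover have "(1 + g) * (1 - t) - (g * (1 - t) - (1 + t)) = 2" by (simp add: algebra_simps)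
    ultimately have "Q dvd 2" by simp
    then show False using Q_not_dvd_2 by blast
  qed
  obtain c' where c': "Q dvd (c' * (1 - g) - 1)" using inv_ex[OF pr g2] by blast
  define d where "d = c' * (1 + g)"
  have dq: "Q dvd (d * (1 - g) - (1 + g))"
  proof -
    have "d * (1 - g) - (1 + g) = (1 + g) * (c' * (1 - g) - 1)" unfolding d_def by (simp add: algebra_simps)
    then show ?thesis using c' by simp
  qed
  obtain c'' where c'': "Q dvd (c'' * t - 1)" using inv_ex[OF pr t(1)] by blast
  have "Q dvd (2 * (d * t + 1))"
  proof -
    have "2 * (d * t + 1) = - ((d * (1 - g) - (1 + g)) * (1 - t)) - (d + 1) * (g * (1 - t) - (1 + t))"
      by (simp add: algebra_simps)
    moreover have "Q dvd (- ((d * (1 - g) - (1 + g)) * (1 - t)) - (d + 1) * (g * (1 - t) - (1 + t)))"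
      using dq gq by (intro dvd_diff) (simp_all add: dvd_mult2 dvd_mult)
    ultimately show ?thesis by simp
  qed
  then have dt: "Q dvd (d * t + 1)" using pdvd Q_not_dvd_2 by blast
  have "Q dvd ((d + c'') * t)"
  proof -
    have "Q dvd ((d * t + 1) + (c'' * t - 1))" using dt c'' by (rule dvd_add)
    moreover have "(d * t + 1) + (c'' * t - 1) = (d + c'') * t" by (simp add: algebra_simps)
    ultimately show ?thesis by simp
  qed
  then have "Q dvd (d + c'')" using pdvd t(1) by blast
  then have "Q dvd (d - (- c''))" by simp
  then have "S d = S (- c'')" by (rule S_cong)
  also have "\<dots> = S t" using S_neg S_inv[OF t(1) c''] by simp
  finally have Sd: "S d = S t" .
  have e1: "D t = S g" by (rule D_S[OF t(2) gq])
  have e2: "D g = S d" by (rule D_S[OF g2 dq])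
  have e3: "D t + 2 * S t = sig" by (rule DS[OF t(1)])
  have e4: "D g + 2 * S g = sig" by (rule DS[OF g1])
  show ?thesis using e1 e2 e3 e4 Sd by linarith
qed


lemma E_ab: "Emat (2*M+1) r c = ab (int r * int c)"
proof -
  let ?x = "r * c mod (2*M+1)"
  have x: "int ?x = (int r * int c) mod Q" by (simp add: zmod_int)
  have lt: "?x < 2*M+1" by simp
  have "int (williams (2*M+1) ?x) div 2 = min (int ?x) (Q - int ?x)"
  proof (cases "2 * ?x < 2*M+1")
    case True
    then have "williams (2*M+1) ?x = 2 * ?x" unfolding williams_def by simp
    then have "int (williams (2*M+1) ?x) div 2 = int ?x" by simp
    moreover have "min (int ?x) (Q - int ?x) = int ?x" using True by linarith
    ultimately show ?thesis by simp
  next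
    case False
    then have "williams (2*M+1) ?x = 2 * (2*M+1 - ?x)" unfolding williams_def by simp
    then have "int (williams (2*M+1) ?x) = 2 * (Q - int ?x)" using lt by (simp add: of_nat_diff)
    then have "int (williams (2*M+1) ?x) div 2 = Q - int ?x" by simp
    moreover have "min (int ?x) (Q - int ?x) = Q - int ?x" using False by linarith
    ultimately show ?thesis by simp
  qed
  then show ?thesis unfolding ab_def x[symmetric] Emat_def A1_def .
qed

lemma pair:
  assumes r: "r \<in> {1..M}" and s: "s \<in> {1..M}" and rs: "r \<noteq> s"
  shows "3 * (\<Sum>c\<in>{1..M}. \<bar>Emat (2*M+1) r c - Emat (2*M+1) s c\<bar>) = sig"
proof -
  have nr: "\<not> Q dvd int r" using small_dvd[of "int r"] r by auto
  have ns: "\<not> Q dvd int s" using small_dvd[of "int s"] s by auto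
  obtain i where i: "Q dvd (i * int r - 1)" using inv_ex[OF pr nr] by blast
  define t where "t = int s * i"
  have tq: "Q dvd (t * int r - int s)"
  proof -
    have "t * int r - int s = int s * (i * int r - 1)" unfolding t_def by (simp add: algebra_simps)
    then show ?thesis using i by simp
  qed
  have t1: "\<not> Q dvd t"
  proof
    assume "Q dvd t"
    then have "Q dvd i" using pdvd ns unfolding t_def by blast
    then have "Q dvd (i * int r)" by simp
    then have "Q dvd (i * int r - (i * int r - 1))" using i by (rule dvd_diff)
    then have "Q dvd 1" by simp
    then show False using Q_not_dvd_2 dvd_trans[of Q 1 2] by simp
  qed
  have t2: "\<not> Q dvd (1 - t)"
  proof
    assume "Q dvd (1 - t)"
    then have "Q dvd ((1 - t) * int r)" by simp
    then have "Q dvd ((1 - t) * int r + (t * int r - int s))" using tq by (rule dvd_add)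
    then have "Q dvd (int r - int s)" by (simp add: algebra_simps)
    moreover have "int r - int s \<noteq> 0" "\<bar>int r - int s\<bar> < Q" using r s rs by auto
    ultimately show False using small_dvd' by blast
  qed
  have t3: "\<not> Q dvd (1 + t)"
  proof
    assume "Q dvd (1 + t)"
    then have "Q dvd ((1 + t) * int r)" by simp
    then have "Q dvd ((1 + t) * int r - (t * int r - int s))" using tq by (rule dvd_diff)
    then have "Q dvd (int r + int s)" by (simp add: algebra_simps)
    then show False using small_dvd[of "int r + int s"] r s by auto
  qed
  have "(\<Sum>c\<in>{1..M}. \<bar>Emat (2*M+1) r c - Emat (2*M+1) s c\<bar>)
      = (\<Sum>c\<in>{1..M}. (\<lambda>x y. \<bar>x - y\<bar>) (ab (int r * int c)) (ab (int s * int c)))"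
    by (simp only: E_ab)
  also have "\<dots> = (\<Sum>v\<in>{1..M}. (\<lambda>x y. \<bar>x - y\<bar>) (int v) (ab (t * int v)))"
    by (rule reindex[OF nr tq])
  also have "\<dots> = D t" unfolding D_def by simp
  finally show ?thesis using mainD[OF t1 t2 t3] by simp
qed

lemma col_bij: assumes c: "c \<in> {1..M}"
  shows "bij_betw (\<lambda>r. Emat (2*M+1) r c) {1..M} (int ` {1..M})"
proof -
  have nc: "\<not> Q dvd int c" using small_dvd[of "int c"] c by auto
  have "bij_betw (int \<circ> (\<lambda>r. nat (ab (int c * int r)))) {1..M} (int ` {1..M})"
    by (rule bij_betw_trans[OF bij[OF nc] inj_on_imp_bij_betw]) simp
  moreover have e: "(int \<circ> (\<lambda>r. nat (ab (int c * int r)))) r = Emat (2*M+1) r c" for r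
  proof -
    have "Emat (2*M+1) r c = ab (int c * int r)" using E_ab[of r c] by (simp add: mult.commute)
    then show ?thesis using ab_nonneg[of "int c * int r"] by simp
  qed
  moreover have "bij_betw (\<lambda>r. Emat (2*M+1) r c) {1..M} (int ` {1..M})
      = bij_betw (int \<circ> (\<lambda>r. nat (ab (int c * int r)))) {1..M} (int ` {1..M})"
    by (rule bij_betw_cong) (rule e[symmetric])
  ultimately show ?thesis by simp
qed

end

lemma gauss: "2 * (\<Sum>u\<in>{1..n}. int u) = int n * (int n + 1)"
  by (induction n) (auto simp: algebra_simps)

lemma T_LHD:
  assumes "is_LHD n k X"
  shows "(\<Sum>r\<in>{1..n}. \<Sum>s\<in>{1..n}. \<Sum>c\<in>{1..k}. \<bar>X r c - X s c\<bar>)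
       = int k * (\<Sum>x\<in>int ` {1..n}. \<Sum>y\<in>int ` {1..n}. \<bar>x - y\<bar>)"
proof -
  have "(\<Sum>r\<in>{1..n}. \<Sum>s\<in>{1..n}. \<Sum>c\<in>{1..k}. \<bar>X r c - X s c\<bar>)
      = (\<Sum>r\<in>{1..n}. \<Sum>c\<in>{1..k}. \<Sum>s\<in>{1..n}. \<bar>X r c - X s c\<bar>)"
    by (intro sum.cong refl sum.swap)
  also have "\<dots> = (\<Sum>c\<in>{1..k}. \<Sum>r\<in>{1..n}. \<Sum>s\<in>{1..n}. \<bar>X r c - X s c\<bar>)"
    by (rule sum.swap)
  also have "\<dots> = (\<Sum>c\<in>{1..k}. (\<Sum>x\<in>int ` {1..n}. \<Sum>y\<in>int ` {1..n}. \<bar>x - y\<bar>))"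
  proof (intro sum.cong refl)
    fix c assume c: "c \<in> {1..k}"
    have b: "bij_betw (\<lambda>r. X r c) {1..n} (int ` {1..n})" using assms c unfolding is_LHD_def by blast
    have "(\<Sum>r\<in>{1..n}. \<Sum>s\<in>{1..n}. \<bar>X r c - X s c\<bar>)
        = (\<Sum>r\<in>{1..n}. \<Sum>y\<in>int ` {1..n}. \<bar>X r c - y\<bar>)"
      by (intro sum.cong refl sum.reindex_bij_betw[OF b])
    also have "\<dots> = (\<Sum>x\<in>int ` {1..n}. \<Sum>y\<in>int ` {1..n}. \<bar>x - y\<bar>)"
      by (rule sum.reindex_bij_betw[OF b, of "\<lambda>x. \<Sum>y\<in>int ` {1..n}. \<bar>x - y\<bar>"])
    finally show "(\<Sum>r\<in>{1..n}. \<Sum>s\<in>{1..n}. \<bar>X r c - X s c\<bar>) = \<dots>" .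
  qed
  also have "\<dots> = int k * (\<Sum>x\<in>int ` {1..n}. \<Sum>y\<in>int ` {1..n}. \<bar>x - y\<bar>)" by simp
  finally show ?thesis .
qed

lemma d1_le:
  assumes "r \<in> {1..n}" "s \<in> {1..n}" "r \<noteq> s"
  shows "d1 n k X \<le> (\<Sum>c\<in>{1..k}. \<bar>X r c - X s c\<bar>)"
proof -
  let ?A = "{(\<Sum>c=1..k. \<bar>X r c - X s c\<bar>) | r s. 1 \<le> r \<and> r < s \<and> s \<le> n}"
  have fin: "finite ?A"
  proof (rule finite_subset)
    show "?A \<subseteq> (\<lambda>(r,s). (\<Sum>c=1..k. \<bar>X r c - X s c\<bar>)) ` ({1..n} \<times> {1..n})" by force
  qed simp
  show ?thesis
  proof (cases "r < s")
    case True
    then have "(\<Sum>c\<in>{1..k}. \<bar>X r c - X s c\<bar>) \<in> ?A" using assms by auto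
    then show ?thesis unfolding d1_def using fin by (rule Min_le[rotated])
  next
    case False
    then have "s < r" using assms by auto
    then have "(\<Sum>c\<in>{1..k}. \<bar>X s c - X r c\<bar>) \<in> ?A" using assms by auto
    then have "d1 n k X \<le> (\<Sum>c\<in>{1..k}. \<bar>X s c - X r c\<bar>)" unfolding d1_def using fin by (rule Min_le[rotated])
    then show ?thesis by (simp add: abs_minus_commute)
  qed
qed

lemma offdiag_sum:
  fixes d :: int
  shows "(\<Sum>r\<in>{1..n}. \<Sum>s\<in>{1..n}. (if r = s then 0 else d)) = int n * (int n - 1) * d"
proof -
  have "(\<Sum>s\<in>{1..n}. (if r = s then 0 else d)) = int n * d - (if r \<in> {1..n} then d else 0)" for r
  proof -
    have "(\<Sum>s\<in>{1..n}. (if r = s then 0 else d)) = (\<Sum>s\<in>{1..n}. d - (if r = s then d else 0))"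
      by (intro sum.cong) auto
    also have "\<dots> = int n * d - (if r \<in> {1..n} then d else 0)"
      by (simp add: sum_subtractf)
    finally show ?thesis .
  qed
  then have "(\<Sum>r\<in>{1..n}. \<Sum>s\<in>{1..n}. (if r = s then 0 else d)) = (\<Sum>r\<in>{1..n}. int n * d - d)"
    by simp
  also have "\<dots> = int n * (int n - 1) * d" by (simp add: algebra_simps)
  finally show ?thesis .
qed

lemma lower:
  assumes "is_LHD n k X"
  shows "int n * (int n - 1) * d1 n k X \<le> (\<Sum>r\<in>{1..n}. \<Sum>s\<in>{1..n}. \<Sum>c\<in>{1..k}. \<bar>X r c - X s c\<bar>)"
proof -
  have "int n * (int n - 1) * d1 n k X = (\<Sum>r\<in>{1..n}. \<Sum>s\<in>{1..n}. (if r = s then 0 else d1 n k X))"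
    by (rule offdiag_sum[symmetric])
  also have "\<dots> \<le> (\<Sum>r\<in>{1..n}. \<Sum>s\<in>{1..n}. \<Sum>c\<in>{1..k}. \<bar>X r c - X s c\<bar>)"
  proof (intro sum_mono)
    fix r s assume rs: "r \<in> {1..n}" "s \<in> {1..n}"
    show "(if r = s then 0 else d1 n k X) \<le> (\<Sum>c\<in>{1..k}. \<bar>X r c - X s c\<bar>)"
    proof (cases "r = s")
      case True then show ?thesis by simp
    next
      case False then show ?thesis using d1_le[OF rs False] by simp
    qed
  qed
  finally show ?thesis .
qed


theorem corollary1:
  fixes p m q :: nat
  assumes "prime p" and "odd p" and "m = p - 1" and "q = 2 * m + 1" and "prime q"
  shows "is_LHD m m (Emat q)
         \<and> d1 m m (Emat q) = int (((m + 1) * m) div 3)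
         \<and> (\<forall>X. is_LHD m m X \<longrightarrow> d1 m m X \<le> d1 m m (Emat q))"
proof -
  have p2: "p \<ge> 2" using assms(1) prime_ge_2_nat by blast
  have "p \<noteq> 2" using assms(2) by auto
  then have m2: "m \<ge> 2" using p2 assms(3) by auto
  have pq: "prime (int (2*m+1))"
    by (simp only: prime_nat_int_transfer) (simp only: assms(4)[symmetric] assms(5))
  interpret PQ m
  proof
    show "prime (int (2*m+1))" by (rule pq)
    show "m \<ge> 1" using m2 by simp
  qed
  let ?E = "Emat (2*m+1)"
  have qe: "q = 2*m+1" using assms(4) by simp
  have sg: "sig = int m * (int m + 1)" unfolding sig_def by (rule gauss)
  define V where "V = (\<Sum>c\<in>{1..m}. \<bar>?E 1 c - ?E 2 c\<bar>)"
  have V3: "3 * V = sig" unfolding V_def using m2 by (intro pair) auto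
  have pairV: "(\<Sum>c\<in>{1..m}. \<bar>?E r c - ?E s c\<bar>) = V"
    if "r \<in> {1..m}" "s \<in> {1..m}" "r \<noteq> s" for r s
    using pair[OF that] V3 by simp
  have lhd: "is_LHD m m ?E" unfolding is_LHD_def using col_bij by blast
  let ?A = "{(\<Sum>c=1..m. \<bar>?E r c - ?E s c\<bar>) | r s. 1 \<le> r \<and> r < s \<and> s \<le> m}"
  have setV: "?A = {V}"
  proof
    show "?A \<subseteq> {V}"
    proof
      fix x assume "x \<in> ?A"
      then obtain r s where "x = (\<Sum>c=1..m. \<bar>?E r c - ?E s c\<bar>)" "1 \<le> r" "r < s" "s \<le> m" by blast
      then show "x \<in> {V}" using pairV[of r s] by simp
    qed
    have "V \<in> ?A"
      unfolding V_def using m2 by (intro CollectI exI[of _ 1] exI[of _ 2]) auto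
    then show "{V} \<subseteq> ?A" by blast
  qed
  have dE: "d1 m m ?E = V" unfolding d1_def setV by simp
  have Vval: "V = int (((m + 1) * m) div 3)"
  proof -
    have "int ((m + 1) * m) = 3 * V" using V3 sg by (simp add: algebra_simps)
    then have h: "int ((m + 1) * m) = 3 * V" .
    have "int (((m + 1) * m) div 3) = int ((m + 1) * m) div int 3" by (rule zdiv_int)
    also have "\<dots> = (3 * V) div 3" using h by simp
    also have "\<dots> = V" by simp
    finally show ?thesis by simp
  qed
  have TE: "(\<Sum>r\<in>{1..m}. \<Sum>s\<in>{1..m}. \<Sum>c\<in>{1..m}. \<bar>?E r c - ?E s c\<bar>) = int m * (int m - 1) * V"
  proof -
    have "(\<Sum>r\<in>{1..m}. \<Sum>s\<in>{1..m}. \<Sum>c\<in>{1..m}. \<bar>?E r c - ?E s c\<bar>)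
        = (\<Sum>r\<in>{1..m}. \<Sum>s\<in>{1..m}. (if r = s then 0 else V))"
      using pairV by (intro sum.cong refl) auto
    also have "\<dots> = int m * (int m - 1) * V" by (rule offdiag_sum)
    finally show ?thesis .
  qed
  have ub: "d1 m m X \<le> V" if X: "is_LHD m m X" for X
  proof -
    have "int m * (int m - 1) * d1 m m X \<le> int m * (int m - 1) * V"
    proof -
      have "int m * (int m - 1) * d1 m m X \<le> (\<Sum>r\<in>{1..m}. \<Sum>s\<in>{1..m}. \<Sum>c\<in>{1..m}. \<bar>X r c - X s c\<bar>)"
        by (rule lower[OF X])
      also have "\<dots> = int m * (\<Sum>x\<in>int ` {1..m}. \<Sum>y\<in>int ` {1..m}. \<bar>x - y\<bar>)"
        by (rule T_LHD[OF X])
      also have "\<dots> = (\<Sum>r\<in>{1..m}. \<Sum>s\<in>{1..m}. \<Sum>c\<in>{1..m}. \<bar>?E r c - ?E s c\<bar>)"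
        by (rule T_LHD[OF lhd, symmetric])
      also have "\<dots> = int m * (int m - 1) * V" by (rule TE)
      finally show ?thesis .
    qed
    moreover have "int m * (int m - 1) > 0" using m2 by simp
    ultimately show ?thesis using mult_le_cancel_left_pos by blast
  qed
  show ?thesis using lhd dE Vval ub qe by simp
qed

end
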